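(* Let $K$ and $K'$ be two non-degenerate CMIs, with $\mathrm{can}(\mathrm{pur}(K))=(C,\langle\mathbb I_K,\mathbb I_K,P_i,1\le i\le t\rangle)$. Let $K''=R_K^{K'}$ and $\mathrm{can}(\mathrm{pur}(K''))=(C'',\langle\mathbb I_{K''},\mathbb I_{K''},P''_j,1\le j\le r\rangle)$, and let $P=\bigcup_{i=1}^tP_i$, $P''=\bigcup_{j=1}^rP''_j$. If $K$ implies $K'$ and $R_K^{K'}\ne(\cdot,\langle\ \rangle)$, then $P''\subseteq P$.
   Context: Setting: $X_1,\dots,X_n$ jointly distributed discrete random variables with $H(X_i)<\infty$; distribution unspecified. $X_\alpha=(X_i,i\in\alpha)$, $X_\emptyset$ constant. A CMI is $K=(C,\langle Q_1,\dots,Q_k\rangle)$, $k\ge0$, $C\subseteq\{1,\dots,n\}$, $\langle\cdot\rangle$ an unordered multiset of subsets; valid (for a given distribution) if $\sum_iH(X_{Q_i}|X_C)-H(X_{Q_1},\dots,X_{Q_k}|X_C)=0$. Empty members may be deleted. Degenerate = valid for every distribution, written $(\cdot,\langle\ \rangle)$. "$K$ implies $K'$": for every joint distribution, if $K$ is valid then $K'$ is valid. $\mathrm{pur}(K)=(C,\langle Q_i\setminus C:Q_i\setminus C\ne\emptyset\rangle)$. For pure $K$: $\mathbb I_K$ = indices lying in at least two members of the collection if $k\ge2$, else $\emptyset$; $P_1,\dots,P_t$ the nonempty sets among $Q_i\setminus\mathbb I_K$; $\mathrm{can}(K)=(\cdot,\langle\ \rangle)$ if $k\le1$, $(C,\langle\mathbb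 I_K,\mathbb I_K\rangle)$ if $k\ge2,\mathbb I_K\ne\emptyset,t\le1$, $(C,\langle P_1..P_t\rangle)$ if $k\ge2,\mathbb I_K=\emptyset$, $(C,\langle\mathbb I_K,\mathbb I_K,P_1..P_t\rangle)$ if $k\ge2,\mathbb I_K\ne\emptyset,t\ge2$. For general $K$, $\mathbb I_K$ is the repeated-index set of $\mathrm{pur}(K)$; general-form notation omits the copies of $\mathbb I_K$ when empty and uses $t=0$ for $(C,\langle\mathbb I_K,\mathbb I_K\rangle)$. $R_K^{K'}$ ("$K'$ conditioning on $K$"): with $\mathrm{can}(\mathrm{pur}(K'))=(C',\langle\mathbb I_{K'},\mathbb I_{K'},P'_j,1\le j\le s\rangle)$, $D=\mathbb I_{K'}\setminus\mathbb I_K$ and $T_1,\dots,T_u$ the nonempty sets among $P'_j\setminus\mathbb I_K$: $R_K^{K'}=(\cdot,\langle\ \rangle)$ if $D=\emptyset,u\le1$; $(C'\setminus\mathbb I_K,\langle T_1..T_u\rangle)$ if $D=\emptyset,u\ge2$; $(C'\setminus\mathbb I_K,\langle D,D\rangle)$ if $D\ne\emptyset,u\le1$; $(C'\setminus\mathbb I_K,\langle D,D,T_1..T_u\rangle)$ if $D\ne\emptyset,u\ge2$. *)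

theory Defs
  imports "HOL-Probability.Probability_Mass_Function" "HOL-Library.Multiset"
begin

text \<open>A joint distribution of the discrete random variables X_1..X_n is modelled as a pmf on
  value vectors (nat \<Rightarrow> nat); coordinate i is the value of X_i (countable alphabets
  relabelled into nat). Coordinates outside {1..n} are irrelevant.\<close>

type_synonym cmi = "nat set \<times> nat set multiset"

definition marg :: "(nat \<Rightarrow> nat) pmf \<Rightarrow> nat set \<Rightarrow> (nat \<Rightarrow> nat) pmf" where
  "marg p A = map_pmf (\<lambda>x i. if i \<in> A then x i else 0) p"

definition ent_terms :: "(nat \<Rightarrow> nat) pmf \<Rightarrow> nat set \<Rightarrow> (nat \<Rightarrow> nat) \<Rightarrow> real" where
  "ent_terms p A = (\<lambda>v. - pmf (marg p A) v * ln (pmf (marg p A) v))"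

text \<open>Shannon entropy H(X_A) (natural log; base is irrelevant for validity).\<close>
definition ent :: "(nat \<Rightarrow> nat) pmf \<Rightarrow> nat set \<Rightarrow> real" where
  "ent p A = infsum (ent_terms p A) UNIV"

definition cent :: "(nat \<Rightarrow> nat) pmf \<Rightarrow> nat set \<Rightarrow> nat set \<Rightarrow> real" where
  "cent p A C = ent p (A \<union> C) - ent p C"

text \<open>Admissible distributions: H(X_i) < \<infinity> for all i in {1..n}.\<close>
definition admissible :: "nat \<Rightarrow> (nat \<Rightarrow> nat) pmf \<Rightarrow> bool" where
  "admissible n p \<longleftrightarrow> (\<forall>i\<in>{1..n}. ent_terms p {i} summable_on UNIV)"

definition wf_cmi :: "nat \<Rightarrow> cmi \<Rightarrow> bool" where
  "wf_cmi n K \<longleftrightarrow> fst K \<subseteq> {1..n} \<and> (\<forall>Q\<in>#snd K. Q \<subseteq> {1..n})"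

definition valid :: "(nat \<Rightarrow> nat) pmf \<Rightarrow> cmi \<Rightarrow> bool" where
  "valid p K \<longleftrightarrow>
     (\<Sum>Q\<in>#snd K. cent p Q (fst K)) - cent p (\<Union>(set_mset (snd K))) (fst K) = 0"

definition degenerate :: "nat \<Rightarrow> cmi \<Rightarrow> bool" where
  "degenerate n K \<longleftrightarrow> (\<forall>p. admissible n p \<longrightarrow> valid p K)"

definition implies :: "nat \<Rightarrow> cmi \<Rightarrow> cmi \<Rightarrow> bool" where
  "implies n K K' \<longleftrightarrow> (\<forall>p. admissible n p \<longrightarrow> valid p K \<longrightarrow> valid p K')"

text \<open>The degenerate CMI symbol (\<cdot>, \<langle> \<rangle>), represented as the CMI with empty collection.\<close>
definition deg_cmi :: cmi where
  "deg_cmi = ({}, {#})"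

definition pur :: "cmi \<Rightarrow> cmi" where
  "pur K = (fst K, image_mset (\<lambda>Q. Q - fst K) (filter_mset (\<lambda>Q. Q - fst K \<noteq> {}) (snd K)))"

definition rep_pure :: "cmi \<Rightarrow> nat set" where
  "rep_pure K = (if size (snd K) \<ge> 2
      then {i. size (filter_mset (\<lambda>Q. i \<in> Q) (snd K)) \<ge> 2} else {})"

definition rep :: "cmi \<Rightarrow> nat set" where
  "rep K = rep_pure (pur K)"

definition Psets :: "cmi \<Rightarrow> nat set multiset" where
  "Psets K = filter_mset (\<lambda>S. S \<noteq> {}) (image_mset (\<lambda>Q. Q - rep_pure K) (snd K))"

definition can :: "cmi \<Rightarrow> cmi" where
  "can K = (let I = rep_pure K; P = Psets K in
     if size (snd K) \<le> 1 then deg_cmi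
     else if I \<noteq> {} \<and> size P \<le> 1 then (fst K, {#I, I#})
     else if I = {} then (fst K, P)
     else (fst K, {#I, I#} + P))"

text \<open>The P-members of can(pur K) in the general-form notation
  (C, \<langle>I_K, I_K, P_i, 1 \<le> i \<le> t\<rangle>): t = 0 when can(pur K) is (C,\<langle>I_K,I_K\<rangle>)
  or degenerate.\<close>
definition canP :: "cmi \<Rightarrow> nat set multiset" where
  "canP K = (let K0 = pur K; I = rep_pure K0 in
     snd (can K0) - (if I \<noteq> {} then {#I, I#} else {#}))"

definition condR :: "cmi \<Rightarrow> cmi \<Rightarrow> cmi" where
  "condR K K' = (let D = rep K' - rep K;
        T = filter_mset (\<lambda>S. S \<noteq> {}) (image_mset (\<lambda>S. S - rep K) (canP K'));
        C = fst (can (pur K')) - rep K in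
     if D = {} \<and> size T \<le> 1 then deg_cmi
     else if D = {} then (C, T)
     else if size T \<le> 1 then (C, {#D, D#})
     else (C, {#D, D#} + T))"

end

theory Submission
  imports Defs
begin

lemma ent_terms_pmf_of_set:
  assumes "finite F" "F \<noteq> {}"
  shows "(\<lambda>v. - pmf (pmf_of_set F) v * ln (pmf (pmf_of_set F) v)) summable_on UNIV"
    "infsum (\<lambda>v. - pmf (pmf_of_set F) v * ln (pmf (pmf_of_set F) v)) UNIV = ln (card F)"
proof -
  let ?f = "\<lambda>v. - pmf (pmf_of_set F) v * ln (pmf (pmf_of_set F) v)"
  have z: "?f v = 0" if "v \<in> UNIV - F" for v using that assms by simp
  show "?f summable_on UNIV"
    using summable_on_cong_neutral[of F UNIV ?f ?f] z assms by auto
  have "infsum ?f UNIV = infsum ?f F"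
    by (rule infsum_cong_neutral) (use z in auto)
  also have "\<dots> = (\<Sum>v\<in>F. - (1 / real (card F)) * ln (1 / real (card F)))"
    using assms by simp
  also have "\<dots> = ln (card F)"
    using assms by (simp add: ln_div)
  finally show "infsum ?f UNIV = ln (card F)" .
qed

definition w1 :: "nat set \<Rightarrow> nat \<Rightarrow> nat" where "w1 S = (\<lambda>i. if i \<in> S then 1 else 0)"
definition pS :: "nat set \<Rightarrow> (nat \<Rightarrow> nat) pmf" where "pS S = pmf_of_set {(\<lambda>i. 0), w1 S}"

lemma marg_pS:
  "marg (pS S) A = pmf_of_set ((\<lambda>x i. if i \<in> A then x i else 0) ` {(\<lambda>i. 0), w1 S})"
proof (cases "A \<inter> S = {}")
  case True
  have "(\<lambda>x i. if i \<in> A then x i else 0) ` {(\<lambda>i. 0), w1 S} = {(\<lambda>i. 0)}"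
    using True by (auto simp: w1_def fun_eq_iff)
  moreover have "marg (pS S) A = map_pmf (\<lambda>_. (\<lambda>i. 0)) (pmf_of_set {(\<lambda>i. 0), w1 S})"
    unfolding marg_def pS_def
    by (rule map_pmf_cong) (use True in \<open>auto simp: w1_def fun_eq_iff\<close>)
  ultimately show ?thesis by (simp add: pmf_of_set_singleton)
next
  case False
  then obtain j where j: "j \<in> A" "j \<in> S" by auto
  have "inj_on (\<lambda>x i. if i \<in> A then x i else 0) {(\<lambda>i. 0), w1 S}"
    using j by (auto simp: inj_on_def w1_def fun_eq_iff)
  then show ?thesis unfolding marg_def pS_def by (simp add: map_pmf_of_set_inj)
qed

lemma card_img_pS:
  "card ((\<lambda>x i. if i \<in> A then x i else 0) ` {(\<lambda>i. 0::nat), w1 S}) = (if A \<inter> S = {} then 1 else 2)"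
proof (cases "A \<inter> S = {}")
  case True
  have "(\<lambda>x i. if i \<in> A then x i else 0) ` {(\<lambda>i. 0), w1 S} = {(\<lambda>i. 0)}"
    using True by (auto simp: w1_def fun_eq_iff)
  then show ?thesis using True by simp
next
  case False
  then obtain j where j: "j \<in> A" "j \<in> S" by auto
  have "(\<lambda>x i. if i \<in> A then x i else 0) (w1 S) \<noteq> (\<lambda>i. 0)"
    using j by (auto simp: w1_def fun_eq_iff)
  then show ?thesis using False by (auto simp: card_insert_if)
qed

lemma ent_pS: "ent (pS S) A = (if A \<inter> S = {} then 0 else ln 2)"
proof -
  let ?F = "(\<lambda>x i. if i \<in> A then x i else 0) ` {(\<lambda>i. 0::nat), w1 S}"
  have "ent (pS S) A = infsum (\<lambda>v. - pmf (pmf_of_set ?F) v * ln (pmf (pmf_of_set ?F) v)) UNIV"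
    unfolding ent_def ent_terms_def by (simp only: marg_pS)
  also have "\<dots> = ln (card ?F)" by (rule ent_terms_pmf_of_set(2)) auto
  finally show ?thesis by (simp only: card_img_pS) simp
qed

lemma adm_pS: "admissible n (pS S)"
  unfolding admissible_def ent_terms_def
proof
  fix i
  let ?F = "(\<lambda>x j. if j \<in> {i} then x j else 0) ` {(\<lambda>i. 0::nat), w1 S}"
  have "(\<lambda>v. - pmf (pmf_of_set ?F) v * ln (pmf (pmf_of_set ?F) v)) summable_on UNIV"
    by (rule ent_terms_pmf_of_set(1)) auto
  then show "(\<lambda>v. - pmf (marg (pS S) {i}) v * ln (pmf (marg (pS S) {i}) v)) summable_on UNIV"
    by (simp only: marg_pS)
qed

lemma cent_pS: "cent (pS S) A C = (if C \<inter> S = {} \<and> A \<inter> S \<noteq> {} then ln 2 else 0)"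
  unfolding cent_def ent_pS by auto


abbreviation meets :: "nat set \<Rightarrow> nat set \<Rightarrow> bool" where "meets S Q \<equiv> Q \<inter> S \<noteq> {}"

lemma sum_if_size: "(\<Sum>Q\<in>#M. if P Q then (c::real) else 0) = c * size (filter_mset P M)"
  by (induction M) (auto simp: algebra_simps)

lemma valid_pS: "valid (pS S) K \<longleftrightarrow> (fst K \<inter> S \<noteq> {} \<or> size (filter_mset (meets S) (snd K)) \<le> 1)"
proof (cases "fst K \<inter> S = {}")
  case False
  then show ?thesis unfolding valid_def cent_pS by simp
next
  case True
  let ?m = "size (filter_mset (meets S) (snd K))"
  have s: "(\<Sum>Q\<in>#snd K. cent (pS S) Q (fst K)) = ln 2 * ?m"
    unfolding cent_pS using True sum_if_size[of "meets S" "ln 2" "snd K"] by simp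
  have u: "cent (pS S) (\<Union>(set_mset (snd K))) (fst K) = (if ?m > 0 then ln 2 else 0)"
    unfolding cent_pS using True by (auto simp: filter_mset_eq_mempty_iff)
  have key: "ln 2 * real m - (if m > 0 then ln 2 else 0) = 0 \<longleftrightarrow> m \<le> 1" for m :: nat
  proof (cases "m = 0")
    case False
    then have "ln 2 * m - (if m > 0 then ln 2 else 0) = ln 2 * (real m - 1)" by (simp add: algebra_simps)
    then show ?thesis using False by auto
  qed simp
  have "ln 2 * ?m - (if ?m > 0 then ln 2 else 0) = 0 \<longleftrightarrow> ?m \<le> 1" by (rule key)
  then show ?thesis unfolding valid_def s u using True by simp
qed

lemma size_filter_image: "size (filter_mset P (image_mset f M)) = size (filter_mset (\<lambda>x. P (f x)) M)"
  by (simp add: filter_mset_image_mset)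

lemma size_filter_mono: "(\<And>Q. P Q \<Longrightarrow> P2 Q) \<Longrightarrow> size (filter_mset P M) \<le> size (filter_mset P2 M)"
  by (induction M) auto

lemma size_filter_sub: "N \<subseteq># M \<Longrightarrow> size (filter_mset P N) \<le> size (filter_mset P M)"
  by (intro size_mset_mono multiset_filter_mono)

lemma size_filter_or: "size (filter_mset (\<lambda>Q. P Q \<or> R Q) M) \<le> size (filter_mset P M) + size (filter_mset R M)"
  by (induction M) auto

lemma canP_cases: "canP L = {#} \<or> (size (snd (pur L)) \<ge> 2 \<and> canP L = Psets (pur L))"
  unfolding canP_def can_def Let_def deg_cmi_def by auto

lemma canP_full:
  assumes "size (snd (pur L)) \<ge> 2" "size (Psets (pur L)) \<ge> 2"
  shows "canP L = Psets (pur L)"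
  using assms unfolding canP_def can_def Let_def deg_cmi_def by auto

lemma pur_size_filter:
  assumes "\<And>Q. P Q \<longleftrightarrow> P (Q - fst L)" "\<And>Q. P Q \<Longrightarrow> Q - fst L \<noteq> {}"
  shows "size (filter_mset P (snd (pur L))) = size (filter_mset P (snd L))"
proof -
  have "size (filter_mset P (snd (pur L))) = size (filter_mset (\<lambda>Q. Q - fst L \<noteq> {} \<and> P (Q - fst L)) (snd L))"
    unfolding pur_def by (simp add: size_filter_image filter_filter_mset)
  also have "\<dots> = size (filter_mset P (snd L))"
    using assms by (metis (no_types, lifting) filter_mset_cong)
  finally show ?thesis .
qed

lemma pur_size_le: "size (filter_mset (meets S) (snd (pur L))) \<le> size (filter_mset (meets S) (snd L))"
proof -
  have "size (filter_mset (meets S) (snd (pur L))) = size (filter_mset (\<lambda>Q. Q - fst L \<noteq> {} \<and> meets S (Q - fst L)) (snd L))"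
    unfolding pur_def by (simp add: size_filter_image filter_filter_mset)
  also have "\<dots> \<le> size (filter_mset (meets S) (snd L))" by (rule size_filter_mono) auto
  finally show ?thesis .
qed

lemma Psets_size_le: "size (filter_mset (meets S) (Psets L)) \<le> size (filter_mset (meets S) (snd L))"
proof -
  have "size (filter_mset (meets S) (Psets L)) = size (filter_mset (\<lambda>Q. Q - rep_pure L \<noteq> {} \<and> meets S (Q - rep_pure L)) (snd L))"
    unfolding Psets_def by (simp add: size_filter_image filter_filter_mset)
  also have "\<dots> \<le> size (filter_mset (meets S) (snd L))" by (rule size_filter_mono) auto
  finally show ?thesis .
qed

lemma Psets_size_eq:
  assumes "S \<inter> rep_pure L = {}"
  shows "size (filter_mset (meets S) (Psets L)) = size (filter_mset (meets S) (snd L))"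
proof -
  have "size (filter_mset (meets S) (Psets L)) = size (filter_mset (\<lambda>Q. Q - rep_pure L \<noteq> {} \<and> meets S (Q - rep_pure L)) (snd L))"
    unfolding Psets_def by (simp add: size_filter_image filter_filter_mset)
  also have "\<dots> = size (filter_mset (meets S) (snd L))"
    using assms by (intro arg_cong[where f=size] filter_mset_cong) auto
  finally show ?thesis .
qed

lemma canP_size_le: "size (filter_mset (meets S) (canP L)) \<le> size (filter_mset (meets S) (snd L))"
proof -
  have "size (filter_mset (meets S) (canP L)) \<le> size (filter_mset (meets S) (Psets (pur L)))"
    using canP_cases[of L] by auto
  also have "\<dots> \<le> size (filter_mset (meets S) (snd (pur L)))" by (rule Psets_size_le)
  also have "\<dots> \<le> size (filter_mset (meets S) (snd L))" by (rule pur_size_le)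
  finally show ?thesis .
qed

lemma canP_elem:
  assumes "z \<in> \<Union>(set_mset (canP L))"
  shows "z \<notin> fst L" "z \<notin> rep L" "size (filter_mset (\<lambda>Q. z \<in> Q) (snd L)) = 1"
proof -
  obtain A where A: "A \<in># canP L" "z \<in> A" using assms by auto
  then have ne: "canP L \<noteq> {#}" by auto
  with canP_cases[of L] have sz: "size (snd (pur L)) \<ge> 2" and eq: "canP L = Psets (pur L)" by auto
  from A eq obtain Q where Q: "Q \<in># snd (pur L)" "A = Q - rep_pure (pur L)"
    unfolding Psets_def by auto
  with A have zQ: "z \<in> Q" and zr: "z \<notin> rep_pure (pur L)" by auto
  show "z \<notin> rep L" using zr unfolding rep_def by simp
  from Q obtain Q0 where "Q = Q0 - fst L" unfolding pur_def by auto
  with zQ show zf: "z \<notin> fst L" by auto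
  have "size (filter_mset (\<lambda>Q. z \<in> Q) (snd (pur L))) \<le> 1"
    using zr sz unfolding rep_pure_def by auto
  moreover have "size (filter_mset (\<lambda>Q. z \<in> Q) (snd (pur L))) \<ge> 1"
    using Q zQ by (metis (mono_tags, lifting) One_nat_def Suc_leI multiset_partition multiset_nonemptyE
       filter_mset_eq_mempty_iff nonempty_has_size size_eq_0_iff_empty zero_less_iff_neq_zero)
  moreover have "size (filter_mset (\<lambda>Q. z \<in> Q) (snd (pur L))) = size (filter_mset (\<lambda>Q. z \<in> Q) (snd L))"
    by (rule pur_size_filter) (use zf in auto)
  ultimately show "size (filter_mset (\<lambda>Q. z \<in> Q) (snd L)) = 1" by simp
qed


theorem mainTheorem8:
  fixes n :: nat and K K' :: cmi
  assumes "wf_cmi n K" and "wf_cmi n K'"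
    and "\<not> degenerate n K" and "\<not> degenerate n K'"
    and "implies n K K'"
    and "condR K K' \<noteq> deg_cmi"
  shows "\<Union>(set_mset (canP (condR K K'))) \<subseteq> \<Union>(set_mset (canP K))"
proof (rule subsetI, rule ccontr)
  fix x assume xR: "x \<in> \<Union>(set_mset (canP (condR K K')))" and xK: "x \<notin> \<Union>(set_mset (canP K))"
  define D where "D = rep K' - rep K"
  define T where "T = filter_mset (\<lambda>S. S \<noteq> {}) (image_mset (\<lambda>S. S - rep K) (canP K'))"
  define C2 where "C2 = fst (can (pur K')) - rep K"
  have cR: "condR K K' = (if D = {} \<and> size T \<le> 1 then deg_cmi
     else if D = {} then (C2, T)
     else if size T \<le> 1 then (C2, {#D, D#})
     else (C2, {#D, D#} + T))"
    unfolding condR_def Let_def D_def T_def C2_def by simp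
  have h1: "size (filter_mset (\<lambda>Q. x \<in> Q) (snd (condR K K'))) = 1"
    by (rule canP_elem(3)[OF xR])
  have T2: "size T \<ge> 2 \<and> size (filter_mset (\<lambda>Q. x \<in> Q) T) = 1"
    using assms(6) h1 unfolding cR by (auto split: if_splits)
  then obtain A where A: "A \<in># T" "x \<in> A"
    by (metis filter_mset_eq_mempty_iff one_neq_zero size_empty)
  have "size T = size (filter_mset (\<lambda>Q. x \<in> Q) T) + size (filter_mset (\<lambda>Q. x \<notin> Q) T)"
    by (metis multiset_partition size_union)
  with T2 have "size (filter_mset (\<lambda>Q. x \<notin> Q) T) \<ge> 1" by simp
  then obtain B where B: "B \<in># T" "x \<notin> B"
    by (metis filter_mset_eq_mempty_iff le_zero_eq one_neq_zero size_empty)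
  then have "B \<noteq> {}" unfolding T_def by auto
  then obtain y where y: "y \<in> B" by auto
  from A obtain A0 where A0: "A0 \<in># canP K'" "A = A0 - rep K" unfolding T_def by auto
  from B obtain B0 where B0: "B0 \<in># canP K'" "B = B0 - rep K" unfolding T_def by auto
  have xK': "x \<in> \<Union>(set_mset (canP K'))" and xr: "x \<notin> rep K" using A A0 by auto
  have yK': "y \<in> \<Union>(set_mset (canP K'))" and yr: "y \<notin> rep K" using y B0 by auto
  define S where "S = {x, y}"
  have fK': "fst K' \<inter> S = {}" using canP_elem(1)[OF xK'] canP_elem(1)[OF yK'] S_def by auto
  have s1: "size (filter_mset (\<lambda>Q. x \<in> Q) (filter_mset (meets S) T)) = 1"
  proof -
    have "filter_mset (\<lambda>Q. x \<in> Q) (filter_mset (meets S) T) = filter_mset (\<lambda>Q. x \<in> Q) T"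
      unfolding filter_filter_mset S_def by (rule filter_mset_cong) auto
    then show ?thesis using T2 by simp
  qed
  have "B \<in># filter_mset (\<lambda>Q. x \<notin> Q) (filter_mset (meets S) T)"
    using B y S_def by auto
  then have s2: "size (filter_mset (\<lambda>Q. x \<notin> Q) (filter_mset (meets S) T)) \<ge> 1"
    by (metis One_nat_def Suc_leI empty_iff set_mset_empty size_eq_0_iff_empty zero_less_iff_neq_zero)
  have "size (filter_mset (meets S) T) \<ge> 2"
    using s1 s2 by (metis multiset_partition size_union one_add_one add_le_mono le_refl)
  also have "size (filter_mset (meets S) T) \<le> size (filter_mset (meets S) (canP K'))"
    unfolding T_def by (simp add: size_filter_image filter_filter_mset, rule size_filter_mono) auto
  also have "\<dots> \<le> size (filter_mset (meets S) (snd K'))" by (rule canP_size_le)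
  finally have "\<not> valid (pS S) K'" using fK' valid_pS by auto
  moreover have "valid (pS S) K"
  proof (rule ccontr)
    assume nv: "\<not> valid (pS S) K"
    then have fK: "fst K \<inter> S = {}" and m2: "size (filter_mset (meets S) (snd K)) \<ge> 2"
      using valid_pS by auto
    have "size (filter_mset (meets S) (snd (pur K))) = size (filter_mset (meets S) (snd K))"
      by (rule pur_size_filter) (use fK in auto)
    with m2 have m3: "size (filter_mset (meets S) (snd (pur K))) \<ge> 2" by simp
    then have sz: "size (snd (pur K)) \<ge> 2" by (meson le_trans size_filter_mset_lesseq)
    have rS: "S \<inter> rep_pure (pur K) = {}" using xr yr S_def rep_def by auto
    have "size (filter_mset (meets S) (Psets (pur K))) \<ge> 2"
      using Psets_size_eq[OF rS] m3 by simp
    then have "size (Psets (pur K)) \<ge> 2" by (meson le_trans size_filter_mset_lesseq)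
    with sz have cK: "canP K = Psets (pur K)" by (rule canP_full)
    have yle: "size (filter_mset (\<lambda>Q. y \<in> Q) (snd (pur K))) \<le> 1"
      using sz yr unfolding rep_def rep_pure_def by auto
    have "size (filter_mset (meets S) (snd (pur K))) \<le> size (filter_mset (\<lambda>Q. x \<in> Q \<or> y \<in> Q) (snd (pur K)))"
      by (rule size_filter_mono) (auto simp: S_def)
    also have "\<dots> \<le> size (filter_mset (\<lambda>Q. x \<in> Q) (snd (pur K))) + size (filter_mset (\<lambda>Q. y \<in> Q) (snd (pur K)))"
      by (rule size_filter_or)
    finally have "size (filter_mset (\<lambda>Q. x \<in> Q) (snd (pur K))) \<ge> 1" using m3 yle by linarith
    then obtain Q where Q: "Q \<in># snd (pur K)" "x \<in> Q"
      by (metis filter_mset_eq_mempty_iff le_zero_eq one_neq_zero size_empty)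
    have "Q - rep_pure (pur K) \<in># Psets (pur K)" using Q xr unfolding Psets_def rep_def by auto
    then show False using xK Q xr cK unfolding rep_def by auto
  qed
  ultimately show False using assms(5) adm_pS unfolding implies_def by blast
qed

end
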